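(* Let $X$ be a real Banach space having a strong atom $u\in S_X$ which is also a big point. Then $X$ is isometrically isomorphic to $\ell^1(\Gamma)$ for some set $\Gamma$.
   Context: $\mathcal{G}_X$ is the group of surjective linear isometries (rotations) of $X$; $u\in S_X$ is a big point if $\overline{\mathrm{conv}}(\{T(u):T\in\mathcal{G}_X\})=B_X$. For a closed subspace $Y\subset X$, a continuous linear surjective projection $P: X\to Y$ is an isometric reflection projection if $I-2P\in\mathcal{G}_X$; $Y$ is then an isometric reflection subspace. A point $u\in S_X$ is a strong atom if (1) the one-dimensional subspace $[u]$ is an isometric reflection subspace, and (2) for every closed subspace $Y\subset X$ and every isometric reflection projection $P:X\to Y$, either $P(u)=u$ or $P(u)=0$. *)

theory Defs
  imports "HOL-Analysis.Analysis"
begin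

definition rotation :: "('a::real_normed_vector \<Rightarrow> 'a) \<Rightarrow> bool" where
  "rotation T \<longleftrightarrow> linear T \<and> surj T \<and> (\<forall>x. norm (T x) = norm x)"

definition big_point :: "'a::real_normed_vector \<Rightarrow> bool" where
  "big_point u \<longleftrightarrow> norm u = 1 \<and>
     closure (convex hull {T u | T. rotation T}) = cball 0 1"

definition isometric_reflection_projection ::
  "('a::real_normed_vector \<Rightarrow> 'a) \<Rightarrow> 'a set \<Rightarrow> bool" where
  "isometric_reflection_projection P Y \<longleftrightarrow>
     closed Y \<and> subspace Y \<and> bounded_linear P \<and> range P = Y \<and>
     (\<forall>x. P (P x) = P x) \<and> rotation (\<lambda>x. x - 2 *\<^sub>R P x)"

definition isometric_reflection_subspace :: "'a::real_normed_vector set \<Rightarrow> bool" where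
  "isometric_reflection_subspace Y \<longleftrightarrow> (\<exists>P. isometric_reflection_projection P Y)"

definition strong_atom :: "'a::real_normed_vector \<Rightarrow> bool" where
  "strong_atom u \<longleftrightarrow> norm u = 1 \<and>
     isometric_reflection_subspace (span {u}) \<and>
     (\<forall>Y P. isometric_reflection_projection P Y \<longrightarrow> P u = u \<or> P u = 0)"

definition l1_space :: "'g set \<Rightarrow> ('g \<Rightarrow> real) set" where
  "l1_space \<Gamma> = {f. (\<lambda>i. \<bar>f i\<bar>) summable_on \<Gamma> \<and> (\<forall>i. i \<notin> \<Gamma> \<longrightarrow> f i = 0)}"

definition l1_norm :: "'g set \<Rightarrow> ('g \<Rightarrow> real) \<Rightarrow> real" where
  "l1_norm \<Gamma> f = (\<Sum>\<^sub>\<infinity>i\<in>\<Gamma>. \<bar>f i\<bar>)"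

definition isometrically_isomorphic_l1 :: "'a::real_normed_vector itself \<Rightarrow> 'g set \<Rightarrow> bool" where
  "isometrically_isomorphic_l1 _ \<Gamma> \<longleftrightarrow>
     (\<exists>T :: 'a \<Rightarrow> ('g \<Rightarrow> real).
        (\<forall>x y. T (x + y) = (\<lambda>i. T x i + T y i)) \<and>
        (\<forall>c x. T (c *\<^sub>R x) = (\<lambda>i. c * T x i)) \<and>
        bij_betw T UNIV (l1_space \<Gamma>) \<and>
        (\<forall>x. l1_norm \<Gamma> (T x) = norm x))"

end

theory Submission imports Defs begin

lemma rot_bl: assumes "rotation T" shows "bounded_linear T"
proof -
  have l: "linear T" and n: "\<And>x. norm (T x) = norm x" using assms by (auto simp: rotation_def)
  show ?thesis
    by (rule bounded_linear_intro[where K=1]) (auto simp: linear_add[OF l] linear_scale[OF l] n)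
qed

lemma rot_inj: assumes "rotation T" shows "inj T"
proof (rule injI)
  fix x y assume "T x = T y"
  have l: "linear T" and n: "\<And>x. norm (T x) = norm x" using assms by (auto simp: rotation_def)
  have "T (x - y) = 0" using \<open>T x = T y\<close> by (simp add: linear_diff[OF l])
  then have "norm (x - y) = 0" using n[of "x - y"] by simp
  then show "x = y" by simp
qed

lemma rot_bij: assumes "rotation T" shows "bij T"
  using rot_inj[OF assms] assms by (auto simp: rotation_def bij_def)

lemma rot_inv1: assumes "rotation T" shows "T (inv T x) = x"
  using assms by (simp add: rotation_def surj_f_inv_f)

lemma rot_inv2: assumes "rotation T" shows "inv T (T x) = x"
  using rot_inj[OF assms] by simp

lemma rot_inv: assumes "rotation T" shows "rotation (inv T)"
proof -
  have l: "linear T" and n: "\<And>x. norm (T x) = norm x" using assms by (auto simp: rotation_def)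
  have inj: "inj T" by (rule rot_inj[OF assms])
  have "linear (inv T)"
  proof (rule linearI)
    fix x y show "inv T (x + y) = inv T x + inv T y"
      by (rule injD[OF inj]) (simp add: linear_add[OF l] rot_inv1[OF assms])
  next
    fix c x show "inv T (c *\<^sub>R x) = c *\<^sub>R inv T x"
      by (rule injD[OF inj]) (simp add: linear_scale[OF l] rot_inv1[OF assms])
  qed
  moreover have "surj (inv T)" using rot_inj[OF assms] by (simp add: inj_imp_surj_inv)
  moreover have "norm (inv T x) = norm x" for x using n[of "inv T x"] rot_inv1[OF assms] by simp
  ultimately show ?thesis by (simp add: rotation_def)
qed

lemma rot_comp: assumes "rotation S" "rotation T" shows "rotation (\<lambda>x. S (T x))"
proof -
  have "linear (\<lambda>x. S (T x))" using assms linear_compose[of T S] by (auto simp: rotation_def o_def)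
  moreover have "surj (\<lambda>x. S (T x))"
    by (rule surjI[of _ "\<lambda>y. inv T (inv S y)"]) (simp add: rot_inv1 assms)
  ultimately show ?thesis using assms by (simp add: rotation_def)
qed

lemma rot_neg: assumes "rotation T" shows "rotation (\<lambda>x. - T x)"
proof -
  have l: "linear T" using assms by (simp add: rotation_def)
  have "linear (\<lambda>x. - T x)" using l by (simp add: linear_compose_neg)
  moreover have "surj (\<lambda>x. - T x)" 
    by (rule surjI[of _ "\<lambda>y. inv T (- y)"]) (simp add: rot_inv1[OF assms])
  ultimately show ?thesis using assms by (simp add: rotation_def)
qed

lemma rot_id: "rotation (\<lambda>x. x)" by (simp add: rotation_def linear_id[unfolded id_def])

lemma proj_conj:
  assumes P: "isometric_reflection_projection P Y" and S: "rotation S"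
  shows "isometric_reflection_projection (\<lambda>x. inv S (P (S x))) (inv S ` Y)"
proof -
  have cY: "closed Y" and sY: "subspace Y" and bP: "bounded_linear P" and rP: "range P = Y"
    and iP: "\<And>x. P (P x) = P x" and R: "rotation (\<lambda>x. x - 2 *\<^sub>R P x)"
    using P by (auto simp: isometric_reflection_projection_def)
  have bS: "bounded_linear S" by (rule rot_bl[OF S])
  have Si: "rotation (inv S)" by (rule rot_inv[OF S])
  have bSi: "bounded_linear (inv S)" by (rule rot_bl[OF Si])
  have eq: "inv S ` Y = S -` Y"
  proof
    show "inv S ` Y \<subseteq> S -` Y" using rot_inv1[OF S] by auto
    show "S -` Y \<subseteq> inv S ` Y"
    proof
      fix x assume "x \<in> S -` Y"
      then have "S x \<in> Y" by simp
      moreover have "x = inv S (S x)" by (simp add: rot_inv2[OF S])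
      ultimately show "x \<in> inv S ` Y" by (intro image_eqI[of x "inv S" "S x"])
    qed
  qed
  have "closed (inv S ` Y)" unfolding eq
    by (rule continuous_closed_vimage[OF cY]) (simp add: bounded_linear.continuous[OF bS])
  moreover have "subspace (inv S ` Y)" unfolding eq using sY
    by (auto simp: subspace_def linear_add[OF bounded_linear.linear[OF bS]] linear_scale[OF bounded_linear.linear[OF bS]] linear_0[OF bounded_linear.linear[OF bS]])
  moreover have "bounded_linear (\<lambda>x. inv S (P (S x)))"
    using bounded_linear_compose[OF bSi bounded_linear_compose[OF bP bS]] .
  moreover have "range (\<lambda>x. inv S (P (S x))) = inv S ` Y"
  proof -
    have "range (\<lambda>x. P (S x)) = range P"
    proof
      show "range (\<lambda>x. P (S x)) \<subseteq> range P" by auto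
      show "range P \<subseteq> range (\<lambda>x. P (S x))"
      proof
        fix z assume "z \<in> range P"
        then obtain y where "z = P y" by auto
        then have "z = P (S (inv S y))" by (simp add: rot_inv1[OF S])
        then show "z \<in> range (\<lambda>x. P (S x))" by (rule range_eqI)
      qed
    qed
    moreover have "range (\<lambda>x. inv S (P (S x))) = inv S ` range (\<lambda>x. P (S x))"
      by (simp add: image_image)
    ultimately show ?thesis using rP by simp
  qed
  moreover have "inv S (P (S (inv S (P (S x))))) = inv S (P (S x))" for x
    by (simp add: rot_inv1[OF S] iP)
  moreover have "rotation (\<lambda>x. x - 2 *\<^sub>R inv S (P (S x)))"
  proof -
    have "(\<lambda>x. x - 2 *\<^sub>R inv S (P (S x))) = (\<lambda>x. inv S ((\<lambda>y. y - 2 *\<^sub>R P y) (S x)))"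
      by (rule ext) (simp add: linear_diff[OF bounded_linear.linear[OF bSi]] linear_scale[OF bounded_linear.linear[OF bSi]] rot_inv2[OF S])
    then show ?thesis using rot_comp[OF Si rot_comp[OF R S]] by simp
  qed
  ultimately show ?thesis by (simp add: isometric_reflection_projection_def)
qed


locale SA = fixes u :: "'a::banach" assumes sa: "strong_atom u" and bp: "big_point u"
begin

definition P0 where "P0 = (SOME P. isometric_reflection_projection P (span {u}))"

lemma P0: "isometric_reflection_projection P0 (span {u})"
  using sa unfolding strong_atom_def isometric_reflection_subspace_def P0_def by (metis someI_ex)

lemma nu: "norm u = 1" using sa by (simp add: strong_atom_def)
lemma u0: "u \<noteq> 0" using nu by auto

lemma bP0: "bounded_linear P0" and rP0: "range P0 = span {u}" and iP0: "P0 (P0 x) = P0 x"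
  and R0: "rotation (\<lambda>x. x - 2 *\<^sub>R P0 x)"
  using P0 by (auto simp: isometric_reflection_projection_def)

definition g where "g x = (SOME c. P0 x = c *\<^sub>R u)"

lemma gP: "P0 x = g x *\<^sub>R u"
proof -
  have "P0 x \<in> span {u}" using rP0 by auto
  then have "\<exists>c. P0 x = c *\<^sub>R u" by (auto simp: span_singleton)
  then show ?thesis unfolding g_def by (rule someI_ex)
qed

lemma g_uniq: "P0 x = c *\<^sub>R u \<Longrightarrow> g x = c"
  using gP[of x] u0 by (metis scaleR_cancel_right)

lemma nP0: "norm (P0 x) \<le> norm x"
proof -
  have n: "norm (x - 2 *\<^sub>R P0 x) = norm x" using R0 by (simp add: rotation_def)
  have "2 *\<^sub>R P0 x = x - (x - 2 *\<^sub>R P0 x)" by simp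
  then have "norm (2 *\<^sub>R P0 x) \<le> norm x + norm (x - 2 *\<^sub>R P0 x)" by (metis norm_triangle_ineq4)
  then show ?thesis using n by simp
qed

lemma g_norm: "\<bar>g x\<bar> \<le> norm x"
  using nP0[of x] gP[of x] nu by simp

lemma g_bl: "bounded_linear g"
proof (rule bounded_linear_intro[where K=1])
  have l: "linear P0" using bP0 bounded_linear.linear by blast
  fix x y show "g (x + y) = g x + g y"
    by (rule g_uniq) (metis linear_add[OF l] gP scaleR_add_left)
next
  have l: "linear P0" using bP0 bounded_linear.linear by blast
  fix r x show "g (r *\<^sub>R x) = r *\<^sub>R g x"
    by (rule g_uniq) (metis linear_scale[OF l] gP scaleR_scaleR real_scaleR_def)
next
  fix x show "norm (g x) \<le> norm x * 1" using g_norm by simp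
qed

lemma P0u: "P0 u = u"
proof -
  have "u \<in> range P0" using rP0 by (simp add: span_base)
  then obtain y where "u = P0 y" by auto
  then show ?thesis using iP0 by metis
qed

lemma gu: "g u = 1" using g_uniq[of u 1] P0u by simp

lemma key: assumes S: "rotation S" shows "g (S u) = 0 \<or> S u = g (S u) *\<^sub>R u"
proof -
  have Q: "isometric_reflection_projection (\<lambda>x. inv S (P0 (S x))) (inv S ` span {u})"
    by (rule proj_conj[OF P0 S])
  then have "inv S (P0 (S u)) = u \<or> inv S (P0 (S u)) = 0"
    using sa unfolding strong_atom_def by blast
  then show ?thesis
  proof
    assume "inv S (P0 (S u)) = u"
    then have "P0 (S u) = S u" by (metis rot_inv1[OF S])
    then show ?thesis using gP by metis
  next
    assume "inv S (P0 (S u)) = 0"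
    then have "P0 (S u) = S 0" by (metis rot_inv1[OF S])
    also have "S 0 = 0" using S by (simp add: rotation_def linear_0)
    finally show ?thesis using gP[of "S u"] u0 by simp
  qed
qed

definition D where "D = {T u | T. rotation T}"
definition Tsel where "Tsel v = (SOME T. rotation T \<and> T u = v)"
definition f where "f v x = g (inv (Tsel v) x)"

lemma Tsel: assumes "v \<in> D" shows "rotation (Tsel v) \<and> Tsel v u = v"
proof -
  have "\<exists>T. rotation T \<and> T u = v" using assms by (auto simp: D_def)
  then show ?thesis unfolding Tsel_def by (rule someI_ex)
qed

lemma D_norm: "v \<in> D \<Longrightarrow> norm v = 1"
  using nu by (auto simp: D_def rotation_def)

lemma D_neg: "v \<in> D \<Longrightarrow> - v \<in> D"
  unfolding D_def using rot_neg by fastforce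

lemma uD: "u \<in> D" unfolding D_def using rot_id by auto

lemma f_bl: "v \<in> D \<Longrightarrow> bounded_linear (f v)"
  unfolding f_def using bounded_linear_compose[OF g_bl rot_bl[OF rot_inv[OF conjunct1[OF Tsel]]]] by blast

lemma f_norm: "v \<in> D \<Longrightarrow> \<bar>f v x\<bar> \<le> norm x"
  unfolding f_def using g_norm rot_inv[OF conjunct1[OF Tsel]] by (metis rotation_def)

lemma f_self: "v \<in> D \<Longrightarrow> f v v = 1"
  unfolding f_def using Tsel[of v] rot_inv2[of "Tsel v" u] gu by metis

lemma f_D: assumes v: "v \<in> D" and w: "w \<in> D" and ne: "f v w \<noteq> 0"
  shows "w = v \<or> w = - v"
proof -
  obtain Tw where Tw: "rotation Tw" "w = Tw u" using w by (auto simp: D_def)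
  have Tv: "rotation (Tsel v)" "Tsel v u = v" using Tsel[OF v] by auto
  define S where "S = (\<lambda>x. inv (Tsel v) (Tw x))"
  have S: "rotation S" unfolding S_def by (rule rot_comp[OF rot_inv[OF Tv(1)] Tw(1)])
  have fS: "f v w = g (S u)" by (simp add: f_def S_def Tw)
  then have "S u = f v w *\<^sub>R u" using key[OF S] ne by auto
  then have "Tsel v (S u) = f v w *\<^sub>R v"
    using Tv by (simp add: rotation_def linear_scale)
  then have wv: "w = f v w *\<^sub>R v" by (simp add: S_def rot_inv1[OF Tv(1)] Tw)
  then have "\<bar>f v w\<bar> = 1" using D_norm[OF v] D_norm[OF w] by (metis norm_scaleR mult.right_neutral)
  then show ?thesis using wv by (cases "f v w \<ge> 0") auto
qed

end

context SA begin

definition ch :: "'a set \<Rightarrow> 'a" where "ch A = (SOME w. w \<in> A)"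
definition G where "G = {v \<in> D. ch {v, - v} = v}"

lemma GD: "v \<in> G \<Longrightarrow> v \<in> D" by (simp add: G_def)

lemma G_cover: assumes "v \<in> D" shows "v \<in> G \<or> - v \<in> G"
proof -
  have "ch {v, -v} \<in> {v, -v}" unfolding ch_def by (rule someI_ex) auto
  moreover have "{- v, - (- v)} = {v, -v}" by auto
  ultimately show ?thesis using assms D_neg[OF assms] by (auto simp: G_def)
qed

lemma G_not_both: assumes "v \<in> G" "- v \<in> G" shows False
proof -
  have "{- v, - (- v)} = {v, -v}" by auto
  then have "v = - v" using assms by (auto simp: G_def)
  then have "(2::real) *\<^sub>R v = 0" by (simp add: scaleR_2 eq_neg_iff_add_eq_0)
  then have "v = 0" by simp
  then show False using D_norm[OF GD[OF assms(1)]] by simp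
qed

lemma f_G: assumes "v \<in> G" "w \<in> G" "w \<noteq> v" shows "f v w = 0"
proof (rule ccontr)
  assume "f v w \<noteq> 0"
  then have "w = v \<or> w = - v" using f_D GD assms by blast
  then show False using assms G_not_both by auto
qed

lemma bigpt: assumes h: "bounded_linear h" and b: "\<And>w. w \<in> D \<Longrightarrow> \<bar>h w\<bar> \<le> 1"
  shows "\<bar>h x\<bar> \<le> norm x"
proof -
  let ?C = "{x. \<bar>h x\<bar> \<le> (1::real)}"
  have cl: "closed ?C"
    by (rule closed_Collect_le) (auto intro!: continuous_intros bounded_linear.continuous_on[OF h])
  have cv: "convex ?C"
  proof (rule convexI)
    fix x y :: 'a and a b :: real assume xy: "x \<in> ?C" "y \<in> ?C" and ab: "0 \<le> a" "0 \<le> b" "a + b = 1"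
    have "h (a *\<^sub>R x + b *\<^sub>R y) = a * h x + b * h y"
      using bounded_linear.linear[OF h] by (simp add: linear_add linear_scale)
    moreover have "\<bar>a * h x + b * h y\<bar> \<le> a * \<bar>h x\<bar> + b * \<bar>h y\<bar>"
      using ab by (metis abs_mult abs_of_nonneg abs_triangle_ineq)
    moreover have "a * \<bar>h x\<bar> + b * \<bar>h y\<bar> \<le> a * 1 + b * 1"
      using xy ab by (intro add_mono mult_left_mono) auto
    ultimately show "a *\<^sub>R x + b *\<^sub>R y \<in> ?C" using ab by simp
  qed
  have "D \<subseteq> ?C" using b by auto
  then have "convex hull D \<subseteq> ?C" using cv by (rule hull_minimal)
  then have "closure (convex hull D) \<subseteq> ?C" using cl by (rule closure_minimal)
  then have ball: "cball 0 1 \<subseteq> ?C" using bp by (simp add: big_point_def D_def)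
  show ?thesis
  proof (cases "x = 0")
    case True then show ?thesis using bounded_linear.linear[OF h] by (simp add: linear_0)
  next
    case False
    have "(1 / norm x) *\<^sub>R x \<in> cball 0 1" using False by simp
    then have "\<bar>h ((1 / norm x) *\<^sub>R x)\<bar> \<le> 1" using ball by blast
    then have "\<bar>h x\<bar> / norm x \<le> 1" using bounded_linear.linear[OF h] by (simp add: linear_scale)
    then show ?thesis using False by (simp add: divide_le_eq)
  qed
qed

lemma L1: assumes F: "finite F" "F \<subseteq> G" shows "(\<Sum>v\<in>F. \<bar>f v x\<bar>) \<le> norm x"
proof -
  define h where "h y = (\<Sum>v\<in>F. sgn (f v x) * f v y)" for y
  have hb: "bounded_linear h" unfolding h_def
    by (rule bounded_linear_sum) (use F GD f_bl in \<open>auto intro: bounded_linear_const_mult\<close>)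
  have hx: "h x = (\<Sum>v\<in>F. \<bar>f v x\<bar>)" unfolding h_def by (intro sum.cong) (auto simp: sgn_real_def)
  have "\<bar>h w\<bar> \<le> 1" if w: "w \<in> D" for w
  proof (cases "\<exists>v0\<in>F. f v0 w \<noteq> 0")
    case True
    then obtain v0 where v0: "v0 \<in> F" "f v0 w \<noteq> 0" by auto
    have w0: "w = v0 \<or> w = - v0" using f_D[OF GD w v0(2)] v0 F by auto
    have z: "f v w = 0" if "v \<in> F - {v0}" for v
    proof (rule ccontr)
      assume "f v w \<noteq> 0"
      then have "w = v \<or> w = - v" using f_D[OF GD w] that F by auto
      then have "v = v0 \<or> v = - v0" using w0 by auto
      then show False using that F G_not_both v0 by auto
    qed
    have "h w = sgn (f v0 x) * f v0 w + (\<Sum>v\<in>F - {v0}. sgn (f v x) * f v w)"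
      unfolding h_def using F v0 by (simp add: sum.remove)
    also have "(\<Sum>v\<in>F - {v0}. sgn (f v x) * f v w) = 0" using z by simp
    finally have "\<bar>h w\<bar> \<le> \<bar>f v0 w\<bar>" by (simp add: abs_mult abs_sgn_eq)
    also have "\<dots> \<le> 1" using f_norm[of v0 w] F v0 GD D_norm[OF w] by auto
    finally show ?thesis .
  next
    case False
    then show ?thesis by (simp add: h_def)
  qed
  then have "\<bar>h x\<bar> \<le> norm x" by (rule bigpt[OF hb])
  then show ?thesis using hx by simp
qed

end

context SA begin

definition Tm where "Tm x = (\<lambda>v. if v \<in> G then f v x else 0)"
definition Sm where "Sm a = infsum (\<lambda>v. a v *\<^sub>R v) G"

lemma f_summ: "(\<lambda>v. \<bar>f v x\<bar>) summable_on G"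
  by (rule nonneg_bdd_above_summable_on) (auto intro!: bdd_aboveI2 L1)

lemma l1_le: "l1_norm G (Tm x) \<le> norm x"
proof -
  have "l1_norm G (Tm x) = infsum (\<lambda>v. \<bar>f v x\<bar>) G"
    unfolding l1_norm_def Tm_def by (rule infsum_cong) simp
  also have "\<dots> \<le> norm x" by (rule infsum_le_finite_sums[OF f_summ L1]) auto
  finally show ?thesis .
qed

lemma Tm_l1: "Tm x \<in> l1_space G"
proof -
  have "(\<lambda>v. \<bar>Tm x v\<bar>) summable_on G"
    using f_summ by (subst summable_on_cong[where g="\<lambda>v. \<bar>f v x\<bar>"]) (auto simp: Tm_def)
  then show ?thesis by (simp add: l1_space_def Tm_def)
qed

lemma Tm_add: "Tm (x + y) = (\<lambda>i. Tm x i + Tm y i)"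
  by (rule ext) (auto simp: Tm_def linear_add[OF bounded_linear.linear[OF f_bl[OF GD]]])

lemma Tm_scale: "Tm (c *\<^sub>R x) = (\<lambda>i. c * Tm x i)"
  by (rule ext) (auto simp: Tm_def linear_scale[OF bounded_linear.linear[OF f_bl[OF GD]]])

lemma Sm_summ: assumes "a \<in> l1_space G" shows "(\<lambda>v. a v *\<^sub>R v) summable_on G"
proof (rule abs_summable_summable)
  have "(\<lambda>v. \<bar>a v\<bar>) summable_on G" using assms by (simp add: l1_space_def)
  then show "(\<lambda>v. a v *\<^sub>R v) abs_summable_on G"
    by (subst summable_on_cong[where g="\<lambda>v. \<bar>a v\<bar>"]) (auto simp: D_norm GD)
qed

lemma Sm_norm: assumes "a \<in> l1_space G" shows "norm (Sm a) \<le> l1_norm G a"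
proof -
  have s: "(\<lambda>v. \<bar>a v\<bar>) summable_on G" using assms by (simp add: l1_space_def)
  have "(\<lambda>v. a v *\<^sub>R v) abs_summable_on G"
    using s by (subst summable_on_cong[where g="\<lambda>v. \<bar>a v\<bar>"]) (auto simp: D_norm GD)
  then have "norm (Sm a) \<le> infsum (\<lambda>v. norm (a v *\<^sub>R v)) G"
    unfolding Sm_def by (rule norm_infsum_bound)
  also have "\<dots> = l1_norm G a" unfolding l1_norm_def
    by (rule infsum_cong) (auto simp: D_norm GD)
  finally show ?thesis .
qed

lemma f_Sm: assumes a: "a \<in> l1_space G" and w: "w \<in> G" shows "f w (Sm a) = a w"
proof -
  have "((\<lambda>v. f w (a v *\<^sub>R v)) has_sum f w (Sm a)) G"
    unfolding Sm_def by (rule has_sum_bounded_linear[OF f_bl[OF GD[OF w]]]) (use Sm_summ[OF a] in simp)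
  then have "f w (Sm a) = infsum (\<lambda>v. f w (a v *\<^sub>R v)) G" by (simp add: infsumI)
  also have "\<dots> = infsum (\<lambda>v. f w (a v *\<^sub>R v)) {w}"
  proof (rule infsum_cong_neutral)
    fix x assume "x \<in> G - {w}"
    then show "f w (a x *\<^sub>R x) = 0"
      using f_G[OF w, of x] by (simp add: linear_scale[OF bounded_linear.linear[OF f_bl[OF GD[OF w]]]])
  qed (use w in auto)
  also have "\<dots> = a w"
    by (simp add: linear_scale[OF bounded_linear.linear[OF f_bl[OF GD[OF w]]]] f_self[OF GD[OF w]])
  finally show ?thesis .
qed

lemma TS: assumes a: "a \<in> l1_space G" shows "Tm (Sm a) = a"
  using a by (auto simp: Tm_def f_Sm l1_space_def)

lemma Sm_add: assumes "a \<in> l1_space G" "b \<in> l1_space G"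
  shows "Sm (\<lambda>i. a i + b i) = Sm a + Sm b"
  unfolding Sm_def using infsum_add[OF Sm_summ[OF assms(1)] Sm_summ[OF assms(2)]]
  by (simp add: scaleR_add_left)

lemma Sm_scale: "Sm (\<lambda>i. c * a i) = c *\<^sub>R Sm a"
  unfolding Sm_def using infsum_scaleR_right[of c "\<lambda>v. a v *\<^sub>R v" G] by simp

definition L where "L x = Sm (Tm x)"

lemma L_bl: "bounded_linear L"
proof (rule bounded_linear_intro[where K=1])
  fix x y show "L (x + y) = L x + L y" unfolding L_def Tm_add by (rule Sm_add[OF Tm_l1 Tm_l1])
next
  fix r x show "L (r *\<^sub>R x) = r *\<^sub>R L x" unfolding L_def Tm_scale by (rule Sm_scale)
next
  fix x show "norm (L x) \<le> norm x * 1" unfolding L_def using Sm_norm[OF Tm_l1] l1_le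
    by (metis mult.right_neutral order_trans)
qed

lemma L_G: assumes v: "v \<in> G" shows "L v = v"
proof -
  have "L v = infsum (\<lambda>w. Tm v w *\<^sub>R w) G" by (simp add: L_def Sm_def)
  also have "\<dots> = infsum (\<lambda>w. Tm v w *\<^sub>R w) {v}"
  proof (rule infsum_cong_neutral)
    fix x assume "x \<in> G - {v}"
    then show "Tm v x *\<^sub>R x = 0" using f_G[of x v] v by (auto simp: Tm_def)
  qed (use v in auto)
  also have "\<dots> = v" using v by (simp add: Tm_def f_self GD)
  finally show ?thesis .
qed

lemma L_id: "L x = x"
proof -
  let ?M = "{x. L x = x}"
  have l: "linear L" using L_bl bounded_linear.linear by blast
  have cl: "closed ?M"
    by (rule closed_Collect_eq) (auto intro!: continuous_intros bounded_linear.continuous_on[OF L_bl])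
  have sub: "subspace ?M"
    by (auto simp: subspace_def linear_add[OF l] linear_scale[OF l] linear_0[OF l])
  have "D \<subseteq> ?M"
  proof
    fix w assume w: "w \<in> D"
    show "w \<in> ?M"
    proof (cases "w \<in> G")
      case True then show ?thesis by (simp add: L_G)
    next
      case False
      then have "- w \<in> G" using G_cover[OF w] by auto
      then have "L (- w) = - w" by (rule L_G)
      then show ?thesis by (simp add: linear_neg[OF l])
    qed
  qed
  then have "convex hull D \<subseteq> ?M" using subspace_imp_convex[OF sub] by (rule hull_minimal)
  then have "closure (convex hull D) \<subseteq> ?M" using cl by (rule closure_minimal)
  then have ball: "cball 0 1 \<subseteq> ?M" using bp by (simp add: big_point_def D_def)
  show ?thesis
  proof (cases "x = 0")
    case True then show ?thesis by (simp add: linear_0[OF l])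
  next
    case False
    have "(1 / norm x) *\<^sub>R x \<in> cball 0 1" using False by simp
    then have "(1 / norm x) *\<^sub>R x \<in> ?M" using ball by blast
    then have "norm x *\<^sub>R ((1 / norm x) *\<^sub>R x) \<in> ?M" by (rule subspace_scale[OF sub])
    then show ?thesis using False by simp
  qed
qed

lemma main: "isometrically_isomorphic_l1 TYPE('a) G"
  unfolding isometrically_isomorphic_l1_def
proof (intro exI[of _ Tm] conjI allI)
  show "Tm (x + y) = (\<lambda>i. Tm x i + Tm y i)" for x y by (rule Tm_add)
  show "Tm (c *\<^sub>R x) = (\<lambda>i. c * Tm x i)" for c x by (rule Tm_scale)
  show "bij_betw Tm UNIV (l1_space G)"
    unfolding bij_betw_def
  proof
    show "inj Tm"
    proof (rule injI)
      fix x y assume "Tm x = Tm y"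
      then have "L x = L y" by (simp add: L_def)
      then show "x = y" by (simp add: L_id)
    qed
    show "range Tm = l1_space G"
    proof
      show "range Tm \<subseteq> l1_space G" using Tm_l1 by auto
      show "l1_space G \<subseteq> range Tm"
      proof
        fix a assume "a \<in> l1_space G"
        then have "a = Tm (Sm a)" by (simp add: TS)
        then show "a \<in> range Tm" by blast
      qed
    qed
  qed
  show "l1_norm G (Tm x) = norm x" for x
    using l1_le[of x] Sm_norm[OF Tm_l1[of x]] L_id[of x] by (simp add: L_def)
qed

end

theorem theorem4p1:
  fixes u :: "'a::banach"
  assumes "strong_atom u" and "big_point u"
  shows "\<exists>\<Gamma> :: 'a set. isometrically_isomorphic_l1 TYPE('a) \<Gamma>"
proof -
  interpret SA u using assms by unfold_locales
  show ?thesis using main by blast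
qed

end
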